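(* For all $0\le\lambda<1$ and $0\le d<1$ there is a number $f(\lambda,d)<1$, depending only on $\lambda$ and $d$, with the following property. Let $H$ be a finite-dimensional complex Hilbert space, $U:H\to H$ unitary and $A:H\to H$ Hermitian such that $1$ is an eigenvalue of $A$ and every other eigenvalue $\mu$ of $A$ satisfies $|\mu|\le\lambda$. Let $A_{\max}$ be the eigenspace of $A$ for the eigenvalue $1$ and $P_{\max}$ the orthogonal projection onto $A_{\max}$, and assume $\|P_{\max}Uv\|\le d\|v\|$ for all $v\in A_{\max}$. Then the spectral radius of $UA$ is at most $f(\lambda,d)$. *)

theory Defs
  imports "Jordan_Normal_Form.Spectral_Radius" "Jordan_Normal_Form.Schur_Decomposition"
begin

text \<open>Finite-dimensional complex Hilbert spaces are modelled as complex n-vectors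
  (complex vec of dimension n) with the standard inner product; operators are n x n
  complex matrices.\<close>

definition vnorm :: "complex vec \<Rightarrow> real" where
  "vnorm v = sqrt (\<Sum>i<dim_vec v. (cmod (v $ i))\<^sup>2)"

definition unitary_mat :: "nat \<Rightarrow> complex mat \<Rightarrow> bool" where
  "unitary_mat n U \<longleftrightarrow> U \<in> carrier_mat n n \<and>
     U * mat_adjoint U = 1\<^sub>m n \<and> mat_adjoint U * U = 1\<^sub>m n"

definition hermitian_mat :: "nat \<Rightarrow> complex mat \<Rightarrow> bool" where
  "hermitian_mat n A \<longleftrightarrow> A \<in> carrier_mat n n \<and> mat_adjoint A = A"

definition eigenspace_mat :: "nat \<Rightarrow> complex mat \<Rightarrow> complex \<Rightarrow> complex vec set" where
  "eigenspace_mat n A k = {v \<in> carrier_vec n. A *\<^sub>v v = k \<cdot>\<^sub>v v}"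

definition orth_proj_onto :: "nat \<Rightarrow> complex mat \<Rightarrow> complex vec set \<Rightarrow> bool" where
  "orth_proj_onto n P S \<longleftrightarrow> P \<in> carrier_mat n n \<and>
     (\<forall>v \<in> carrier_vec n. P *\<^sub>v v \<in> S \<and> (\<forall>w \<in> S. (v - P *\<^sub>v v) \<bullet>c w = 0))"

end

theory Submission imports Defs "HOL-Analysis.L2_Norm" begin

lemma vnorm_L2: "vnorm v = L2_set (\<lambda>i. cmod (v $ i)) {..<dim_vec v}"
  unfolding vnorm_def L2_set_def by simp

lemma vnorm_nonneg[simp]: "0 \<le> vnorm v"
  unfolding vnorm_def by (simp add: sum_nonneg)

lemma cip_sum: "dim_vec y = dim_vec x \<Longrightarrow> x \<bullet>c y = (\<Sum>i<dim_vec x. x $ i * cnj (y $ i))"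
  unfolding scalar_prod_def by (auto intro!: sum.cong simp: lessThan_atLeast0)

lemma cip_self: "v \<bullet>c v = complex_of_real ((vnorm v)\<^sup>2)"
proof -
  have "v \<bullet>c v = (\<Sum>i<dim_vec v. v $ i * cnj (v $ i))" by (rule cip_sum) simp
  also have "\<dots> = (\<Sum>i<dim_vec v. complex_of_real ((cmod (v $ i))\<^sup>2))"
    by (intro sum.cong refl) (simp add: complex_norm_square[symmetric])
  also have "\<dots> = complex_of_real (\<Sum>i<dim_vec v. (cmod (v $ i))\<^sup>2)" by simp
  also have "\<dots> = complex_of_real ((vnorm v)\<^sup>2)" unfolding vnorm_def
    by (simp add: sum_nonneg)
  finally show ?thesis .
qed

lemma cauchy_schwarz: assumes "dim_vec y = dim_vec x"
  shows "cmod (x \<bullet>c y) \<le> vnorm x * vnorm y"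
proof -
  have "cmod (x \<bullet>c y) = cmod (\<Sum>i<dim_vec x. x $ i * cnj (y $ i))" using cip_sum[OF assms] by simp
  also have "\<dots> \<le> (\<Sum>i<dim_vec x. cmod (x $ i * cnj (y $ i)))" by (rule norm_sum)
  also have "\<dots> = (\<Sum>i<dim_vec x. \<bar>cmod (x $ i)\<bar> * \<bar>cmod (y $ i)\<bar>)" by (simp add: norm_mult)
  also have "\<dots> \<le> L2_set (\<lambda>i. cmod (x $ i)) {..<dim_vec x} * L2_set (\<lambda>i. cmod (y $ i)) {..<dim_vec x}"
    by (rule L2_set_mult_ineq)
  also have "\<dots> = vnorm x * vnorm y" using assms by (simp add: vnorm_L2)
  finally show ?thesis .
qed

lemma conj_vec_minus: "x \<in> carrier_vec n \<Longrightarrow> y \<in> carrier_vec n \<Longrightarrow>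
  conjugate (x - y) = conjugate x - (conjugate y :: complex vec)"
  by (intro eq_vecI) auto

lemma cip_add_left: "x \<in> carrier_vec n \<Longrightarrow> y \<in> carrier_vec n \<Longrightarrow> z \<in> carrier_vec n \<Longrightarrow>
  (x + y) \<bullet>c z = x \<bullet>c z + y \<bullet>c (z :: complex vec)"
  by (rule add_scalar_prod_distrib[of _ n]) auto

lemma cip_add_right: "x \<in> carrier_vec n \<Longrightarrow> y \<in> carrier_vec n \<Longrightarrow> z \<in> carrier_vec n \<Longrightarrow>
  z \<bullet>c (x + y) = z \<bullet>c x + z \<bullet>c (y :: complex vec)"
  by (simp add: conjugate_add_vec[of _ n] scalar_prod_add_distrib[of _ n])

lemma cip_minus_left: "x \<in> carrier_vec n \<Longrightarrow> y \<in> carrier_vec n \<Longrightarrow> z \<in> carrier_vec n \<Longrightarrow>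
  (x - y) \<bullet>c z = x \<bullet>c z - y \<bullet>c (z :: complex vec)"
  by (rule minus_scalar_prod_distrib[of _ n]) auto

lemma cip_minus_right: "x \<in> carrier_vec n \<Longrightarrow> y \<in> carrier_vec n \<Longrightarrow> z \<in> carrier_vec n \<Longrightarrow>
  z \<bullet>c (x - y) = z \<bullet>c x - z \<bullet>c (y :: complex vec)"
  by (simp add: conj_vec_minus[of _ n] scalar_prod_minus_distrib[of _ n])

lemma cip_smult_left: "x \<in> carrier_vec n \<Longrightarrow> z \<in> carrier_vec n \<Longrightarrow>
  (c \<cdot>\<^sub>v x) \<bullet>c z = c * (x \<bullet>c (z :: complex vec))"
  by (rule smult_scalar_prod_distrib[of _ n]) auto

lemma cip_smult_right: "x \<in> carrier_vec n \<Longrightarrow> z \<in> carrier_vec n \<Longrightarrow>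
  z \<bullet>c (c \<cdot>\<^sub>v x) = cnj c * (z \<bullet>c (x :: complex vec))"
  by (simp add: conjugate_smult_vec scalar_prod_smult_distrib[of _ n])

lemma cip_cnj: "x \<in> carrier_vec n \<Longrightarrow> z \<in> carrier_vec n \<Longrightarrow>
  z \<bullet>c x = cnj (x \<bullet>c (z :: complex vec))"
proof -
  assume "x \<in> carrier_vec n" "z \<in> carrier_vec n"
  hence d: "dim_vec x = n" "dim_vec z = n" by auto
  show ?thesis by (simp add: cip_sum d cnj_sum mult.commute)
qed

lemma vnorm_smult: "vnorm (c \<cdot>\<^sub>v x) = cmod c * vnorm x"
proof -
  have "(\<Sum>i<dim_vec x. (cmod ((c \<cdot>\<^sub>v x) $ i))\<^sup>2) = (cmod c)\<^sup>2 * (\<Sum>i<dim_vec x. (cmod (x $ i))\<^sup>2)"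
    unfolding sum_distrib_left by (intro sum.cong) (auto simp: norm_mult power_mult_distrib)
  thus ?thesis unfolding vnorm_def by (simp add: real_sqrt_mult)
qed

lemma vnorm_zero_iff: "x \<in> carrier_vec n \<Longrightarrow> vnorm x = 0 \<longleftrightarrow> x = 0\<^sub>v n"
proof -
  assume x: "x \<in> carrier_vec n"
  have "vnorm x = 0 \<longleftrightarrow> x \<bullet>c x = 0" by (simp add: cip_self)
  also have "\<dots> \<longleftrightarrow> x = 0\<^sub>v n" using conjugate_square_eq_0_vec[OF x] by simp
  finally show ?thesis .
qed

lemma cip_expand: assumes "x \<in> carrier_vec n" "y \<in> carrier_vec n"
  shows "(x + y) \<bullet>c (x + y) = x \<bullet>c x + y \<bullet>c y + (x \<bullet>c y + cnj (x \<bullet>c y))"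
proof -
  have xy: "x + y \<in> carrier_vec n" using assms by simp
  have "(x + y) \<bullet>c (x + y) = x \<bullet>c (x + y) + y \<bullet>c (x + y)"
    by (rule cip_add_left[OF assms xy])
  also have "\<dots> = (x \<bullet>c x + x \<bullet>c y) + (y \<bullet>c x + y \<bullet>c y)"
    using cip_add_right[OF assms(1,2)] assms by simp
  also have "y \<bullet>c x = cnj (x \<bullet>c y)" by (rule cip_cnj[OF assms(1,2)])
  finally show ?thesis by simp
qed

lemma pythag: assumes "x \<in> carrier_vec n" "y \<in> carrier_vec n" "x \<bullet>c y = 0"
  shows "(vnorm (x + y))\<^sup>2 = (vnorm x)\<^sup>2 + (vnorm y)\<^sup>2"
proof -
  have "complex_of_real ((vnorm (x + y))\<^sup>2) = (x + y) \<bullet>c (x + y)" by (simp only: cip_self)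
  also have "\<dots> = x \<bullet>c x + y \<bullet>c y" using cip_expand[OF assms(1,2)] assms(3) by simp
  also have "\<dots> = complex_of_real ((vnorm x)\<^sup>2 + (vnorm y)\<^sup>2)" by (simp add: cip_self)
  finally show ?thesis using of_real_eq_iff by blast
qed

lemma vnorm_triangle: assumes "x \<in> carrier_vec n" "y \<in> carrier_vec n"
  shows "vnorm (x + y) \<le> vnorm x + vnorm y"
proof -
  have "complex_of_real ((vnorm (x + y))\<^sup>2) = (x + y) \<bullet>c (x + y)" by (simp only: cip_self)
  also have "\<dots> = x \<bullet>c x + y \<bullet>c y + (x \<bullet>c y + cnj (x \<bullet>c y))" by (rule cip_expand[OF assms])
  also have "\<dots> = complex_of_real ((vnorm x)\<^sup>2 + (vnorm y)\<^sup>2 + 2 * Re (x \<bullet>c y))"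
    by (simp add: cip_self complex_add_cnj)
  finally have e: "(vnorm (x + y))\<^sup>2 = (vnorm x)\<^sup>2 + (vnorm y)\<^sup>2 + 2 * Re (x \<bullet>c y)"
    using of_real_eq_iff by blast
  have "Re (x \<bullet>c y) \<le> vnorm x * vnorm y"
    using cauchy_schwarz[of y x] assms complex_Re_le_cmod[of "x \<bullet>c y"] by auto
  hence "(vnorm (x + y))\<^sup>2 \<le> (vnorm x + vnorm y)\<^sup>2" using e by (simp add: power2_sum)
  thus ?thesis using power2_le_imp_le by force
qed

lemma mat_vec_sum: fixes A :: "'a :: comm_ring_1 mat" assumes "A \<in> carrier_mat n n" "x \<in> carrier_vec n" "i < n"
  shows "(A *\<^sub>v x) $ i = (\<Sum>j<n. A $$ (i,j) * x $ j)"
  using assms by (auto simp: scalar_prod_def lessThan_atLeast0 intro!: sum.cong)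

lemma row_sum: fixes A :: "'a :: comm_ring_1 mat" assumes "A \<in> carrier_mat n n" "x \<in> carrier_vec n" "i < n"
  shows "row A i \<bullet> x = (\<Sum>j<n. A $$ (i,j) * x $ j)"
  using mat_vec_sum[OF assms] assms by simp

lemma adj_carrier: "A \<in> carrier_mat n n \<Longrightarrow> mat_adjoint A \<in> carrier_mat n n"
  by (auto simp: mat_adjoint_def mat_of_rows_def)

lemma adj_index: "A \<in> carrier_mat n n \<Longrightarrow> i < n \<Longrightarrow> j < n \<Longrightarrow>
    mat_adjoint A $$ (i,j) = cnj (A $$ (j,i))"
  by (auto simp: mat_adjoint_def mat_of_rows_def)

lemma adj_ip: fixes A :: "complex mat" assumes A: "A \<in> carrier_mat n n" and x: "x \<in> carrier_vec n" and y: "y \<in> carrier_vec n"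
  shows "(A *\<^sub>v x) \<bullet>c y = x \<bullet>c (mat_adjoint A *\<^sub>v y)"
proof -
  have B: "mat_adjoint A \<in> carrier_mat n n" by (rule adj_carrier[OF A])
  have "(A *\<^sub>v x) \<bullet>c y = (\<Sum>i<n. (\<Sum>j<n. A $$ (i,j) * x $ j) * cnj (y $ i))"
    using A x y by (subst cip_sum) (auto simp: row_sum[OF A x] intro!: sum.cong)
  also have "\<dots> = (\<Sum>i<n. \<Sum>j<n. x $ j * (A $$ (i,j) * cnj (y $ i)))"
    by (simp add: sum_distrib_right sum_distrib_left algebra_simps)
  also have "\<dots> = (\<Sum>j<n. \<Sum>i<n. x $ j * (A $$ (i,j) * cnj (y $ i)))"
    by (rule sum.swap)
  also have "\<dots> = (\<Sum>j<n. x $ j * cnj (\<Sum>i<n. mat_adjoint A $$ (j,i) * y $ i))"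
    by (intro sum.cong refl) (simp add: adj_index[OF A] cnj_sum sum_distrib_left)
  also have "\<dots> = x \<bullet>c (mat_adjoint A *\<^sub>v y)"
    using A x y B by (subst cip_sum) (auto simp: row_sum[OF B y] intro!: sum.cong)
  finally show ?thesis .
qed

lemma herm_ip: assumes "hermitian_mat n A" "x \<in> carrier_vec n" "y \<in> carrier_vec n"
  shows "(A *\<^sub>v x) \<bullet>c y = x \<bullet>c (A *\<^sub>v y)"
  using adj_ip[of A n x y] assms unfolding hermitian_mat_def by auto

lemma unitary_norm: assumes "unitary_mat n U" "x \<in> carrier_vec n"
  shows "vnorm (U *\<^sub>v x) = vnorm x"
proof -
  have U: "U \<in> carrier_mat n n" and UU: "mat_adjoint U * U = 1\<^sub>m n"
    using assms unfolding unitary_mat_def by auto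
  have "(U *\<^sub>v x) \<bullet>c (U *\<^sub>v x) = x \<bullet>c (mat_adjoint U *\<^sub>v (U *\<^sub>v x))"
    using adj_ip[OF U assms(2), of "U *\<^sub>v x"] U assms(2) by simp
  also have "mat_adjoint U *\<^sub>v (U *\<^sub>v x) = (mat_adjoint U * U) *\<^sub>v x"
    using adj_carrier[OF U] U assms(2) by (simp add: assoc_mult_mat_vec)
  also have "\<dots> = x" using UU assms(2) by simp
  finally have "complex_of_real ((vnorm (U *\<^sub>v x))\<^sup>2) = complex_of_real ((vnorm x)\<^sup>2)"
    by (simp only: cip_self)
  hence "(vnorm (U *\<^sub>v x))\<^sup>2 = (vnorm x)\<^sup>2" using of_real_eq_iff by blast
  thus ?thesis by (simp add: power2_eq_iff_nonneg)
qed

definition sa :: "nat \<Rightarrow> complex mat \<Rightarrow> bool" where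
  "sa n M \<longleftrightarrow> M \<in> carrier_mat n n \<and>
     (\<forall>x \<in> carrier_vec n. \<forall>y \<in> carrier_vec n. (M *\<^sub>v x) \<bullet>c y = x \<bullet>c (M *\<^sub>v y))"

lemma pow_comm: assumes "M \<in> carrier_mat n n" shows "M ^\<^sub>m k * M = M * M ^\<^sub>m k"
proof (induction k)
  case 0 then show ?case using assms by simp
next
  case (Suc k)
  have "M ^\<^sub>m Suc k * M = (M ^\<^sub>m k * M) * M" by simp
  also have "\<dots> = (M * M ^\<^sub>m k) * M" using Suc by simp
  also have "\<dots> = M * (M ^\<^sub>m k * M)" using assms by (simp add: assoc_mult_mat[of _ n n _ n _ n])
  finally show ?case by simp
qed

lemma powvec_suc: assumes "M \<in> carrier_mat n n" "x \<in> carrier_vec n"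
  shows "M ^\<^sub>m Suc k *\<^sub>v x = M ^\<^sub>m k *\<^sub>v (M *\<^sub>v x)"
  using assms by (simp add: assoc_mult_mat_vec[of _ n n _ n])

lemma powvec_suc': assumes "M \<in> carrier_mat n n" "x \<in> carrier_vec n"
  shows "M ^\<^sub>m Suc k *\<^sub>v x = M *\<^sub>v (M ^\<^sub>m k *\<^sub>v x)"
proof -
  have "M ^\<^sub>m Suc k *\<^sub>v x = (M * M ^\<^sub>m k) *\<^sub>v x" using pow_comm[OF assms(1), of k] by simp
  also have "\<dots> = M *\<^sub>v (M ^\<^sub>m k *\<^sub>v x)" using assms by (simp add: assoc_mult_mat_vec[of _ n n _ n])
  finally show ?thesis .
qed

lemma powvec_add: assumes "M \<in> carrier_mat n n" "x \<in> carrier_vec n"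
  shows "M ^\<^sub>m (a + b) *\<^sub>v x = M ^\<^sub>m a *\<^sub>v (M ^\<^sub>m b *\<^sub>v x)"
proof -
  have c: "M ^\<^sub>m b *\<^sub>v x \<in> carrier_vec n" using assms pow_carrier_mat mult_mat_vec_carrier by blast
  show ?thesis
proof (induction a)
  case 0
  show ?case using c assms by simp
next
  case (Suc a)
  have "M ^\<^sub>m (Suc a + b) *\<^sub>v x = M *\<^sub>v (M ^\<^sub>m (a + b) *\<^sub>v x)"
    using powvec_suc'[OF assms] by simp
  also have "\<dots> = M *\<^sub>v (M ^\<^sub>m a *\<^sub>v (M ^\<^sub>m b *\<^sub>v x))" using Suc by simp
  also have "\<dots> = M ^\<^sub>m Suc a *\<^sub>v (M ^\<^sub>m b *\<^sub>v x)"
    by (rule powvec_suc'[OF assms(1) c, symmetric])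
  finally show ?case .
qed
qed

lemma sa_pow: assumes "sa n M" "x \<in> carrier_vec n" "y \<in> carrier_vec n"
  shows "(M ^\<^sub>m k *\<^sub>v x) \<bullet>c y = x \<bullet>c (M ^\<^sub>m k *\<^sub>v y)"
proof -
  have M: "M \<in> carrier_mat n n" using assms(1) unfolding sa_def by auto
  show ?thesis
  using assms(2,3)
proof (induction k arbitrary: x)
  case 0 then show ?case using M by simp
next
  case (Suc k)
  have "(M ^\<^sub>m Suc k *\<^sub>v x) \<bullet>c y = (M ^\<^sub>m k *\<^sub>v (M *\<^sub>v x)) \<bullet>c y" using powvec_suc[OF M Suc(2)] by simp
  also have "\<dots> = (M *\<^sub>v x) \<bullet>c (M ^\<^sub>m k *\<^sub>v y)" using Suc M by simp
  also have "\<dots> = x \<bullet>c (M *\<^sub>v (M ^\<^sub>m k *\<^sub>v y))"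
  proof -
    have c: "M ^\<^sub>m k *\<^sub>v y \<in> carrier_vec n" using Suc M pow_carrier_mat mult_mat_vec_carrier by blast
    show ?thesis using c Suc(2) assms(1) unfolding sa_def by blast
  qed
  also have "\<dots> = x \<bullet>c (M ^\<^sub>m Suc k *\<^sub>v y)" using powvec_suc'[OF M Suc(3)] by simp
  finally show ?case .
qed
qed

lemma vnorm_le_sum: "vnorm v \<le> (\<Sum>i<dim_vec v. cmod (v $ i))"
  unfolding vnorm_L2 by (rule L2_set_le_sum) simp

lemma vnorm_entry: "i < dim_vec v \<Longrightarrow> cmod (v $ i) \<le> vnorm v"
  unfolding vnorm_L2 by (rule member_le_L2_set) auto

lemma pow2_limit: fixes x y K :: real
  assumes "0 \<le> x" "0 \<le> y" "\<And>j. x ^ (2 ^ j) \<le> K * y ^ (2 ^ j)"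
  shows "x \<le> y"
proof (rule ccontr)
  assume "\<not> x \<le> y" hence xy: "y < x" by simp
  show False
  proof (cases "y = 0")
    case True
    with assms(3)[of 0] xy show False by simp
  next
    case False
    hence y: "0 < y" using assms(2) by simp
    define r where "r = x / y"
    have r: "1 < r" unfolding r_def using xy y by simp
    obtain m where m: "K < r ^ m" using real_arch_pow[OF r] by blast
    have "m \<le> 2 ^ m" using less_exp[of m] by simp
    hence "r ^ m \<le> r ^ (2 ^ m)" using r by (intro power_increasing) auto
    also have "r ^ (2 ^ m) = x ^ (2 ^ m) / y ^ (2 ^ m)" unfolding r_def by (simp add: power_divide)
    also have "\<dots> \<le> K" using assms(3)[of m] y by (simp add: divide_le_eq)
    finally show False using m by simp
  qed
qed

lemma pow_entry_bound: assumes M: "M \<in> carrier_mat n n" and nb: "norm_bound (M ^\<^sub>m k) c"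
  and b: "b \<in> carrier_vec n"
  shows "vnorm (M ^\<^sub>m k *\<^sub>v b) \<le> real n * (real n * (c * vnorm b))"
proof -
  have Mk: "M ^\<^sub>m k \<in> carrier_mat n n" using M by simp
  let ?v = "M ^\<^sub>m k *\<^sub>v b"
  have ent: "cmod (?v $ i) \<le> real n * (c * vnorm b)" if i: "i < n" for i
  proof -
    have "cmod (?v $ i) = cmod (\<Sum>j<n. (M ^\<^sub>m k) $$ (i,j) * b $ j)" using mat_vec_sum[OF Mk b i] by simp
    also have "\<dots> \<le> (\<Sum>j<n. cmod ((M ^\<^sub>m k) $$ (i,j)) * cmod (b $ j))" by (rule sum_norm_le) (simp add: norm_mult)
    also have "\<dots> \<le> (\<Sum>j<n. c * vnorm b)"
    proof (rule sum_mono)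
      fix j assume "j \<in> {..<n}"
      hence j: "j < n" by simp
      have "cmod ((M ^\<^sub>m k) $$ (i,j)) \<le> c" using nb i j M unfolding norm_bound_def by auto
      moreover have "cmod (b $ j) \<le> vnorm b" using vnorm_entry[of j b] b j by simp
      ultimately show "cmod ((M ^\<^sub>m k) $$ (i,j)) * cmod (b $ j) \<le> c * vnorm b"
        by (intro mult_mono) (auto intro: order_trans[OF norm_ge_zero])
    qed
    also have "\<dots> = real n * (c * vnorm b)" by simp
    finally show ?thesis .
  qed
  have d: "dim_vec ?v = n" using M by simp
  have "vnorm ?v \<le> (\<Sum>i<n. cmod (?v $ i))" using vnorm_le_sum[of ?v] unfolding d .
  also have "\<dots> \<le> (\<Sum>i<n. real n * (c * vnorm b))" by (rule sum_mono) (use ent in auto)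
  finally show ?thesis by simp
qed

lemma sa_sq: assumes "sa n M" "b \<in> carrier_vec n"
  shows "(vnorm (M ^\<^sub>m k *\<^sub>v b))\<^sup>2 \<le> vnorm (M ^\<^sub>m (k + k) *\<^sub>v b) * vnorm b"
proof -
  have M: "M \<in> carrier_mat n n" using assms unfolding sa_def by auto
  have c: "M ^\<^sub>m k *\<^sub>v b \<in> carrier_vec n" using M assms pow_carrier_mat mult_mat_vec_carrier by blast
  have "complex_of_real ((vnorm (M ^\<^sub>m k *\<^sub>v b))\<^sup>2) = (M ^\<^sub>m k *\<^sub>v b) \<bullet>c (M ^\<^sub>m k *\<^sub>v b)"
    by (simp only: cip_self)
  also have "\<dots> = b \<bullet>c (M ^\<^sub>m k *\<^sub>v (M ^\<^sub>m k *\<^sub>v b))" by (rule sa_pow[OF assms c])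
  also have "\<dots> = b \<bullet>c (M ^\<^sub>m (k + k) *\<^sub>v b)" using powvec_add[OF M assms(2)] by simp
  finally have "(vnorm (M ^\<^sub>m k *\<^sub>v b))\<^sup>2 = cmod (b \<bullet>c (M ^\<^sub>m (k + k) *\<^sub>v b))"
    by (metis norm_of_real abs_of_nonneg zero_le_power2)
  also have "\<dots> \<le> vnorm b * vnorm (M ^\<^sub>m (k + k) *\<^sub>v b)"
    by (rule cauchy_schwarz) (use M assms in simp)
  finally show ?thesis by (simp add: mult.commute)
qed

lemma sa_iter: assumes "sa n M" "b \<in> carrier_vec n"
  shows "vnorm (M *\<^sub>v b) ^ (2 ^ j) \<le> vnorm (M ^\<^sub>m (2 ^ j) *\<^sub>v b) * vnorm b ^ (2 ^ j - 1)"
proof (induction j)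
  case 0
  have M: "M \<in> carrier_mat n n" using assms unfolding sa_def by auto
  then show ?case by simp
next
  case (Suc j)
  define N :: nat where "N = 2 ^ j"
  have N1: "1 \<le> N" unfolding N_def by simp
  have IH: "vnorm (M *\<^sub>v b) ^ N \<le> vnorm (M ^\<^sub>m N *\<^sub>v b) * vnorm b ^ (N - 1)" using Suc N_def by simp
  have "vnorm (M *\<^sub>v b) ^ (2 ^ Suc j) = (vnorm (M *\<^sub>v b) ^ N)\<^sup>2" unfolding N_def
    by (simp add: power_mult[symmetric] mult.commute)
  also have "\<dots> \<le> (vnorm (M ^\<^sub>m N *\<^sub>v b) * vnorm b ^ (N - 1))\<^sup>2"
    using IH by (intro power_mono) auto
  also have "\<dots> = (vnorm (M ^\<^sub>m N *\<^sub>v b))\<^sup>2 * vnorm b ^ (2 * (N - 1))"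
    by (simp add: power_mult_distrib power_mult[symmetric] mult.commute)
  also have "\<dots> \<le> (vnorm (M ^\<^sub>m (N + N) *\<^sub>v b) * vnorm b) * vnorm b ^ (2 * (N - 1))"
    using sa_sq[OF assms, of N] by (intro mult_right_mono) auto
  also have "\<dots> = vnorm (M ^\<^sub>m (N + N) *\<^sub>v b) * vnorm b ^ (N + N - 1)"
  proof -
    have "N + N - 1 = Suc (2 * (N - 1))" using N1 by simp
    thus ?thesis by simp
  qed
  also have "N + N = 2 ^ Suc j" unfolding N_def by simp
  finally show ?case .
qed

lemma sa_contract: assumes sa: "sa n M" and n: "n > 0" and sr: "spectral_radius M < 1"
  and b: "b \<in> carrier_vec n"
  shows "vnorm (M *\<^sub>v b) \<le> vnorm b"
proof -
  have M: "M \<in> carrier_mat n n" using sa unfolding sa_def by auto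
  obtain c where c: "\<And>k. norm_bound (M ^\<^sub>m k) c"
    using spectral_radius_jnf_norm_bound_less_1_upper_triangular[OF M sr] by blast
  define K where "K = real n * (real n * c)"
  show ?thesis
  proof (rule pow2_limit[of _ _ K])
    fix j :: nat
    have "vnorm (M *\<^sub>v b) ^ (2 ^ j) \<le> vnorm (M ^\<^sub>m (2 ^ j) *\<^sub>v b) * vnorm b ^ (2 ^ j - 1)"
      by (rule sa_iter[OF sa b])
    also have "\<dots> \<le> (K * vnorm b) * vnorm b ^ (2 ^ j - 1)"
      using pow_entry_bound[OF M c b, of "2 ^ j"] unfolding K_def
      by (intro mult_right_mono) (auto simp: algebra_simps)
    also have "\<dots> = K * vnorm b ^ (2 ^ j)"
    proof -
      have "(2::nat) ^ j = Suc (2 ^ j - 1)" by simp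
      hence "vnorm b ^ (2 ^ j) = vnorm b * vnorm b ^ (2 ^ j - 1)" by (metis power_Suc)
      thus ?thesis by simp
    qed
    finally show "vnorm (M *\<^sub>v b) ^ (2 ^ j) \<le> K * vnorm b ^ (2 ^ j)" .
  qed auto
qed

lemma real_core: fixes X al be m L d :: real
  assumes X: "0 < X" and al: "0 \<le> al" and be: "0 \<le> be" and XX: "X\<^sup>2 = al\<^sup>2 + be\<^sup>2"
  and m: "0 \<le> m" and h1: "m\<^sup>2 * X\<^sup>2 \<le> al\<^sup>2 + L\<^sup>2 * be\<^sup>2" and h2: "m * al \<le> d * al + be"
  and L: "0 \<le> L" "L < 1" and d: "0 \<le> d" "d < 1"
  shows "m \<le> max ((1 + d) / 2) (sqrt (1 - (1 - L\<^sup>2) * ((1 - d) / 4)\<^sup>2))"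
proof -
  define e where "e = (1 - d) / 4"
  have e: "0 < e" unfolding e_def using d by simp
  have X2: "0 < X\<^sup>2" using X by simp
  have L2: "L\<^sup>2 \<le> 1" using L by (simp add: power_le_one)
  have "L\<^sup>2 * be\<^sup>2 \<le> 1 * be\<^sup>2" by (rule mult_right_mono[OF L2 zero_le_power2])
  hence "m\<^sup>2 * X\<^sup>2 \<le> 1 * X\<^sup>2" using h1 XX by linarith
  hence "m\<^sup>2 \<le> 1" using X2 by (rule mult_right_le_imp_le)
  hence m1: "m \<le> 1" using power2_le_imp_le[of m 1] by simp
  have alX: "al \<le> X"
  proof -
    have "al\<^sup>2 \<le> X\<^sup>2" using XX by simp
    thus ?thesis using X power2_le_imp_le[of al X] by simp
  qed
  have Xab: "X \<le> al + be"
  proof -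
    have "X\<^sup>2 \<le> (al + be)\<^sup>2" using XX al be by (simp add: power2_sum)
    thus ?thesis using al be power2_le_imp_le[of X "al + be"] by simp
  qed
  show ?thesis
  proof (cases "be \<le> e * X")
    case True
    have "m * X = m * al + m * (X - al)" by (simp add: algebra_simps)
    also have "\<dots> \<le> (d * al + be) + (X - al)"
      using h2 mult_left_le_one_le[of "X - al" m] m m1 alX by linarith
    also have "\<dots> \<le> d * X + 2 * (e * X)" using mult_left_mono[OF alX d(1)] True Xab by linarith
    also have "\<dots> = ((1 + d) / 2) * X" unfolding e_def by (simp add: field_simps)
    finally have "m * X \<le> ((1 + d) / 2) * X" .
    hence "m \<le> (1 + d) / 2" using X by (rule mult_right_le_imp_le)
    thus ?thesis by (rule order_trans[OF _ max.cobounded1])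
  next
    case False
    have eq1: "(1 - L\<^sup>2) * be\<^sup>2 = be\<^sup>2 - L\<^sup>2 * be\<^sup>2" by (simp add: algebra_simps)
    have "m\<^sup>2 * X\<^sup>2 \<le> X\<^sup>2 - (1 - L\<^sup>2) * be\<^sup>2" using h1 XX eq1 by linarith
    also have "\<dots> \<le> X\<^sup>2 - (1 - L\<^sup>2) * (e * X)\<^sup>2"
    proof -
      have "(e * X)\<^sup>2 \<le> be\<^sup>2" using False e X by (intro power_mono) auto
      hence "(1 - L\<^sup>2) * (e * X)\<^sup>2 \<le> (1 - L\<^sup>2) * be\<^sup>2" using L2 by (intro mult_left_mono) auto
      thus ?thesis by linarith
    qed
    also have "\<dots> = (1 - (1 - L\<^sup>2) * e\<^sup>2) * X\<^sup>2" by (simp add: algebra_simps power_mult_distrib)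
    finally have "m\<^sup>2 * X\<^sup>2 \<le> (1 - (1 - L\<^sup>2) * e\<^sup>2) * X\<^sup>2" .
    hence "m\<^sup>2 \<le> 1 - (1 - L\<^sup>2) * e\<^sup>2" using X2 by (rule mult_right_le_imp_le)
    hence "m \<le> sqrt (1 - (1 - L\<^sup>2) * e\<^sup>2)" by (rule real_le_rsqrt)
    thus ?thesis unfolding e_def by (rule order_trans[OF _ max.cobounded2])
  qed
qed

lemma smult_mat_vec: fixes B :: "complex mat" assumes "B \<in> carrier_mat n n" "v \<in> carrier_vec n"
  shows "(c \<cdot>\<^sub>m B) *\<^sub>v v = c \<cdot>\<^sub>v (B *\<^sub>v v)"
proof (rule eq_vecI)
  fix i assume "i < dim_vec (c \<cdot>\<^sub>v (B *\<^sub>v v))"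
  hence i: "i < n" using assms by simp
  have cB: "c \<cdot>\<^sub>m B \<in> carrier_mat n n" using assms by simp
  show "((c \<cdot>\<^sub>m B) *\<^sub>v v) $ i = (c \<cdot>\<^sub>v (B *\<^sub>v v)) $ i"
    using mat_vec_sum[OF cB assms(2) i] mat_vec_sum[OF assms i] i assms
    by (simp add: sum_distrib_left algebra_simps)
qed (use assms in simp)

lemma eig_in: "v \<in> eigenspace_mat n A 1 \<Longrightarrow> v \<in> carrier_vec n \<and> A *\<^sub>v v = v"
  unfolding eigenspace_mat_def by auto

lemma add_diff_vec: "p \<in> carrier_vec n \<Longrightarrow> w \<in> carrier_vec n \<Longrightarrow> p + (w - p) = (w :: complex vec)"
  by (intro eq_vecI) auto

lemma proj_zero: assumes P: "orth_proj_onto n P S" and S: "S \<subseteq> carrier_vec n"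
  and b: "b \<in> carrier_vec n" and orth: "\<forall>w\<in>S. b \<bullet>c w = 0"
  shows "P *\<^sub>v b = 0\<^sub>v n"
proof -
  have PS: "P *\<^sub>v b \<in> S" and o: "(b - P *\<^sub>v b) \<bullet>c (P *\<^sub>v b) = 0"
    using P b unfolding orth_proj_onto_def by auto
  have Pb: "P *\<^sub>v b \<in> carrier_vec n" using PS S by auto
  have "(P *\<^sub>v b) \<bullet>c (P *\<^sub>v b) = b \<bullet>c (P *\<^sub>v b) - (b - P *\<^sub>v b) \<bullet>c (P *\<^sub>v b)"
    using cip_minus_left[OF b Pb Pb] by simp
  also have "\<dots> = 0" using o orth PS by simp
  finally show ?thesis using conjugate_square_eq_0_vec[OF Pb] by simp
qed

lemma proj_norm: assumes P: "orth_proj_onto n P S" and S: "S \<subseteq> carrier_vec n"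
  and w: "w \<in> carrier_vec n"
  shows "vnorm (P *\<^sub>v w) \<le> vnorm w"
proof -
  have PS: "P *\<^sub>v w \<in> S" and o: "(w - P *\<^sub>v w) \<bullet>c (P *\<^sub>v w) = 0"
    using P w unfolding orth_proj_onto_def by auto
  have Pw: "P *\<^sub>v w \<in> carrier_vec n" using PS S by auto
  have q: "w - P *\<^sub>v w \<in> carrier_vec n" using Pw w by simp
  have o2: "(P *\<^sub>v w) \<bullet>c (w - P *\<^sub>v w) = 0" using cip_cnj[OF Pw q] o by simp
  have "(vnorm w)\<^sup>2 = (vnorm (P *\<^sub>v w))\<^sup>2 + (vnorm (w - P *\<^sub>v w))\<^sup>2"
    using pythag[OF Pw q o2] add_diff_vec[OF Pw w] by simp
  hence "(vnorm (P *\<^sub>v w))\<^sup>2 \<le> (vnorm w)\<^sup>2" by simp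
  thus ?thesis using power2_le_imp_le[of "vnorm (P *\<^sub>v w)" "vnorm w"] by simp
qed

lemma proj_sa: assumes P: "orth_proj_onto n P S" and S: "S \<subseteq> carrier_vec n"
  and x: "x \<in> carrier_vec n" and y: "y \<in> carrier_vec n"
  shows "(P *\<^sub>v x) \<bullet>c y = x \<bullet>c (P *\<^sub>v y)"
proof -
  have PxS: "P *\<^sub>v x \<in> S" and ox: "\<forall>w\<in>S. (x - P *\<^sub>v x) \<bullet>c w = 0"
    using P x unfolding orth_proj_onto_def by auto
  have PyS: "P *\<^sub>v y \<in> S" and oy: "\<forall>w\<in>S. (y - P *\<^sub>v y) \<bullet>c w = 0"
    using P y unfolding orth_proj_onto_def by auto
  have Px: "P *\<^sub>v x \<in> carrier_vec n" using PxS S by auto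
  have Py: "P *\<^sub>v y \<in> carrier_vec n" using PyS S by auto
  have qx: "x - P *\<^sub>v x \<in> carrier_vec n" using x Px by simp
  have qy: "y - P *\<^sub>v y \<in> carrier_vec n" using y Py by simp
  have "(P *\<^sub>v x) \<bullet>c y = (P *\<^sub>v x) \<bullet>c (P *\<^sub>v y + (y - P *\<^sub>v y))" using add_diff_vec[OF Py y] by simp
  also have "\<dots> = (P *\<^sub>v x) \<bullet>c (P *\<^sub>v y) + (P *\<^sub>v x) \<bullet>c (y - P *\<^sub>v y)" by (rule cip_add_right[OF Py qy Px])
  also have "(P *\<^sub>v x) \<bullet>c (y - P *\<^sub>v y) = 0" using cip_cnj[OF qy Px] oy PxS by simp
  finally have e1: "(P *\<^sub>v x) \<bullet>c y = (P *\<^sub>v x) \<bullet>c (P *\<^sub>v y)" by simp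
  have "x \<bullet>c (P *\<^sub>v y) = (P *\<^sub>v x + (x - P *\<^sub>v x)) \<bullet>c (P *\<^sub>v y)" using add_diff_vec[OF Px x] by simp
  also have "\<dots> = (P *\<^sub>v x) \<bullet>c (P *\<^sub>v y) + (x - P *\<^sub>v x) \<bullet>c (P *\<^sub>v y)" by (rule cip_add_left[OF Px qx Py])
  also have "(x - P *\<^sub>v x) \<bullet>c (P *\<^sub>v y) = 0" using ox PyS by simp
  finally show ?thesis using e1 by simp
qed

lemma key_contract:
  fixes A P :: "complex mat" and lam :: real
  assumes H: "hermitian_mat n A" and ev: "\<forall>\<mu>. eigenvalue A \<mu> \<and> \<mu> \<noteq> 1 \<longrightarrow> cmod \<mu> \<le> lam"
  and lam: "0 \<le> lam" "lam < 1" and P: "orth_proj_onto n P (eigenspace_mat n A 1)"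
  and n: "n > 0" and b: "b \<in> carrier_vec n" and orth: "\<forall>w\<in>eigenspace_mat n A 1. b \<bullet>c w = 0"
  shows "vnorm (A *\<^sub>v b) \<le> ((1 + lam) / 2) * vnorm b"
proof -
  define S where "S = eigenspace_mat n A 1"
  have S: "S \<subseteq> carrier_vec n" unfolding S_def eigenspace_mat_def by auto
  have PS: "orth_proj_onto n P S" using P unfolding S_def .
  have A: "A \<in> carrier_mat n n" using H unfolding hermitian_mat_def by auto
  have Pc: "P \<in> carrier_mat n n" using P unfolding orth_proj_onto_def by auto
  define L where "L = (1 + lam) / 2"
  have L: "0 < L" "L < 1" "lam < L" unfolding L_def using lam by auto
  define M where "M = complex_of_real (1 / L) \<cdot>\<^sub>m (A - P)"
  have AP: "A - P \<in> carrier_mat n n" using A Pc by (simp add: minus_carrier_mat)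
  have M: "M \<in> carrier_mat n n" unfolding M_def using AP by simp
  have Mv: "M *\<^sub>v x = complex_of_real (1 / L) \<cdot>\<^sub>v (A *\<^sub>v x - P *\<^sub>v x)" if x: "x \<in> carrier_vec n" for x
    unfolding M_def using smult_mat_vec[OF AP x] minus_mult_distrib_mat_vec[OF A Pc x] by simp
  have Aorth: "\<forall>w\<in>S. (A *\<^sub>v t) \<bullet>c w = 0" if t: "t \<in> carrier_vec n" "\<forall>w\<in>S. t \<bullet>c w = 0" for t
  proof
    fix w assume w: "w \<in> S"
    have wc: "w \<in> carrier_vec n" and Aw: "A *\<^sub>v w = w" using eig_in[of w n A] w unfolding S_def by auto
    have "(A *\<^sub>v t) \<bullet>c w = t \<bullet>c (A *\<^sub>v w)" by (rule herm_ip[OF H t(1) wc])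
    also have "\<dots> = 0" using Aw t(2) w by simp
    finally show "(A *\<^sub>v t) \<bullet>c w = 0" .
  qed
  have saM: "sa n M"
    unfolding sa_def
  proof (intro conjI M ballI)
    fix x y :: "complex vec" assume x: "x \<in> carrier_vec n" and y: "y \<in> carrier_vec n"
    have Ax: "A *\<^sub>v x \<in> carrier_vec n" "P *\<^sub>v x \<in> carrier_vec n" using A Pc x by auto
    have Ay: "A *\<^sub>v y \<in> carrier_vec n" "P *\<^sub>v y \<in> carrier_vec n" using A Pc y by auto
    have "(M *\<^sub>v x) \<bullet>c y = complex_of_real (1 / L) * ((A *\<^sub>v x) \<bullet>c y - (P *\<^sub>v x) \<bullet>c y)"
      using Mv[OF x] cip_smult_left[of "A *\<^sub>v x - P *\<^sub>v x" n y] cip_minus_left[OF Ax y] Ax y by simp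
    also have "\<dots> = complex_of_real (1 / L) * (x \<bullet>c (A *\<^sub>v y) - x \<bullet>c (P *\<^sub>v y))"
      using herm_ip[OF H x y] proj_sa[OF PS S x y] by simp
    also have "\<dots> = x \<bullet>c (M *\<^sub>v y)"
      using Mv[OF y] cip_smult_right[of "A *\<^sub>v y - P *\<^sub>v y" n x] cip_minus_right[OF Ay x] Ay x by simp
    finally show "(M *\<^sub>v x) \<bullet>c y = x \<bullet>c (M *\<^sub>v y)" .
  qed
  have sr: "spectral_radius M < 1"
  proof -
    from spectral_radius_mem_max(1)[OF M n] obtain nu where nu: "nu \<in> spectrum M"
      and srnu: "spectral_radius M = cmod nu" by auto
    from nu obtain v where v: "v \<in> carrier_vec n" "v \<noteq> 0\<^sub>v n" "M *\<^sub>v v = nu \<cdot>\<^sub>v v"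
      unfolding spectrum_def eigenvalue_def eigenvector_def using M by auto
    show ?thesis
    proof (cases "nu = 0")
      case True then show ?thesis using srnu by simp
    next
      case False
      define k where "k = complex_of_real L * nu"
      have k0: "k \<noteq> 0" unfolding k_def using False L by simp
      have Av: "A *\<^sub>v v \<in> carrier_vec n" and Pv: "P *\<^sub>v v \<in> carrier_vec n" using A Pc v by auto
      have w: "A *\<^sub>v v - P *\<^sub>v v = k \<cdot>\<^sub>v v"
      proof -
        have "A *\<^sub>v v - P *\<^sub>v v = complex_of_real L \<cdot>\<^sub>v (complex_of_real (1 / L) \<cdot>\<^sub>v (A *\<^sub>v v - P *\<^sub>v v))"
          using L Av Pv by (simp add: smult_smult_assoc)
        also have "\<dots> = complex_of_real L \<cdot>\<^sub>v (nu \<cdot>\<^sub>v v)" using Mv[OF v(1)] v(3) by simp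
        also have "\<dots> = k \<cdot>\<^sub>v v" unfolding k_def by (simp add: smult_smult_assoc)
        finally show ?thesis .
      qed
      define t where "t = v - P *\<^sub>v v"
      have tc: "t \<in> carrier_vec n" unfolding t_def using v Pv by simp
      have PvS: "P *\<^sub>v v \<in> S" and tS: "\<forall>w\<in>S. t \<bullet>c w = 0"
        using PS v(1) unfolding orth_proj_onto_def t_def by auto
      have APv: "A *\<^sub>v (P *\<^sub>v v) = P *\<^sub>v v" using eig_in[of "P *\<^sub>v v" n A] PvS unfolding S_def by auto
      have At: "A *\<^sub>v t = k \<cdot>\<^sub>v v"
        unfolding t_def using mult_minus_distrib_mat_vec[OF A v(1) Pv] APv w by simp
      have "P *\<^sub>v (A *\<^sub>v t) = 0\<^sub>v n"
        by (rule proj_zero[OF PS S]) (use A tc Aorth[OF tc tS] in auto)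
      hence "k \<cdot>\<^sub>v (P *\<^sub>v v) = 0\<^sub>v n" using At mult_mat_vec[OF Pc v(1), of k] by simp
      hence "cmod k * vnorm (P *\<^sub>v v) = 0" using vnorm_smult[of k "P *\<^sub>v v"] vnorm_zero_iff[of "0\<^sub>v n" n] by simp
      hence "vnorm (P *\<^sub>v v) = 0" using k0 by simp
      hence Pv0: "P *\<^sub>v v = 0\<^sub>v n" using vnorm_zero_iff[OF Pv] by simp
      have tv: "t = v" unfolding t_def Pv0 using v(1) by simp
      have Avk: "A *\<^sub>v v = k \<cdot>\<^sub>v v" using At tv by simp
      have eig: "eigenvalue A k" unfolding eigenvalue_def eigenvector_def
        using Avk v A by auto
      have k1: "k \<noteq> 1"
      proof
        assume "k = 1"
        hence "v \<in> S" unfolding S_def eigenspace_mat_def using Avk v by simp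
        hence "v \<bullet>c v = 0" using tS tv by simp
        thus False using conjugate_square_eq_0_vec[OF v(1)] v(2) by simp
      qed
      have "cmod k \<le> lam" using ev eig k1 by blast
      hence "L * cmod nu \<le> lam" unfolding k_def using L by (simp add: norm_mult)
      hence Lnu: "L * cmod nu \<le> lam" .
      have "cmod nu < 1"
      proof (rule ccontr)
        assume "\<not> cmod nu < 1"
        hence "L * 1 \<le> L * cmod nu" using L by (intro mult_left_mono) auto
        thus False using Lnu L by linarith
      qed
      thus ?thesis using srnu by simp
    qed
  qed
  have "vnorm (M *\<^sub>v b) \<le> vnorm b" by (rule sa_contract[OF saM n sr b])
  moreover have "P *\<^sub>v b = 0\<^sub>v n" by (rule proj_zero[OF PS S b]) (use orth in \<open>simp add: S_def\<close>)
  hence "M *\<^sub>v b = complex_of_real (1 / L) \<cdot>\<^sub>v (A *\<^sub>v b)" using Mv[OF b] A b by simp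
  hence "vnorm (M *\<^sub>v b) = (1 / L) * vnorm (A *\<^sub>v b)" using L by (simp add: vnorm_smult norm_divide)
  ultimately have "(1 / L) * vnorm (A *\<^sub>v b) \<le> vnorm b" by simp
  hence "vnorm (A *\<^sub>v b) \<le> L * vnorm b" using L by (simp add: field_simps)
  thus ?thesis unfolding L_def .
qed

theorem mainTheorem10:
  fixes lam d :: real
  assumes "0 \<le> lam" "lam < 1" "0 \<le> d" "d < 1"
  shows "\<exists>f :: real. f < 1 \<and>
    (\<forall>(n::nat) (U::complex mat) (A::complex mat) (P::complex mat).
       unitary_mat n U \<longrightarrow> hermitian_mat n A \<longrightarrow>
       eigenvalue A 1 \<longrightarrow>
       (\<forall>\<mu>. eigenvalue A \<mu> \<and> \<mu> \<noteq> 1 \<longrightarrow> cmod \<mu> \<le> lam) \<longrightarrow>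
       orth_proj_onto n P (eigenspace_mat n A 1) \<longrightarrow>
       (\<forall>v \<in> eigenspace_mat n A 1. vnorm (P *\<^sub>v (U *\<^sub>v v)) \<le> d * vnorm v) \<longrightarrow>
       spectral_radius (U * A) \<le> f)"
proof -
  define L where "L = (1 + lam) / 2"
  define f where "f = max ((1 + d) / 2) (sqrt (1 - (1 - L\<^sup>2) * ((1 - d) / 4)\<^sup>2))"
  have L: "0 \<le> L" "L < 1" unfolding L_def using assms by auto
  have f1: "f < 1"
  proof -
    have "L * L \<le> L * 1" using L by (intro mult_left_mono) auto
    hence "L\<^sup>2 < 1" using L by (simp add: power2_eq_square)
    moreover have "0 < ((1 - d) / 4)\<^sup>2" using assms by simp
    ultimately have "0 < (1 - L\<^sup>2) * ((1 - d) / 4)\<^sup>2" by simp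
    hence "sqrt (1 - (1 - L\<^sup>2) * ((1 - d) / 4)\<^sup>2) < 1" by simp
    moreover have "(1 + d) / 2 < 1" using assms by simp
    ultimately show ?thesis unfolding f_def by simp
  qed
  show ?thesis
  proof (intro exI[of _ f] conjI f1 allI impI)
    fix n :: nat and U A P :: "complex mat"
    assume U: "unitary_mat n U" and H: "hermitian_mat n A" and e1: "eigenvalue A 1"
      and ev: "\<forall>\<mu>. eigenvalue A \<mu> \<and> \<mu> \<noteq> 1 \<longrightarrow> cmod \<mu> \<le> lam"
      and PP: "orth_proj_onto n P (eigenspace_mat n A 1)"
      and hd: "\<forall>v \<in> eigenspace_mat n A 1. vnorm (P *\<^sub>v (U *\<^sub>v v)) \<le> d * vnorm v"
    define S where "S = eigenspace_mat n A 1"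
    have S: "S \<subseteq> carrier_vec n" unfolding S_def eigenspace_mat_def by auto
    have PS: "orth_proj_onto n P S" using PP unfolding S_def .
    have Ac: "A \<in> carrier_mat n n" using H unfolding hermitian_mat_def by auto
    have Uc: "U \<in> carrier_mat n n" using U unfolding unitary_mat_def by auto
    have Pc: "P \<in> carrier_mat n n" using PP unfolding orth_proj_onto_def by auto
    have n: "n > 0" by (rule eigenvalue_imp_nonzero_dim[OF Ac e1])
    have UA: "U * A \<in> carrier_mat n n" using Uc Ac by simp
    from spectral_radius_mem_max(1)[OF UA n] obtain mu where mu: "mu \<in> spectrum (U * A)"
      and srmu: "spectral_radius (U * A) = cmod mu" by auto
    from mu obtain x where x: "x \<in> carrier_vec n" "x \<noteq> 0\<^sub>v n" "(U * A) *\<^sub>v x = mu \<cdot>\<^sub>v x"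
      unfolding spectrum_def eigenvalue_def eigenvector_def using UA by auto
    define a where "a = P *\<^sub>v x"
    define b where "b = x - a"
    define c where "c = A *\<^sub>v b"
    have aS: "a \<in> S" and borth: "\<forall>w\<in>S. b \<bullet>c w = 0"
      using PS x(1) unfolding orth_proj_onto_def a_def b_def by auto
    have ac: "a \<in> carrier_vec n" using aS S by auto
    have bc: "b \<in> carrier_vec n" unfolding b_def using x ac by simp
    have cc: "c \<in> carrier_vec n" unfolding c_def using Ac bc by simp
    have Aa: "A *\<^sub>v a = a" using eig_in[of a n A] aS unfolding S_def by auto
    have xab: "x = a + b" unfolding b_def using add_diff_vec[OF ac x(1)] by simp
    have Ax: "A *\<^sub>v x = a + c" unfolding xab c_def using mult_add_distrib_mat_vec[OF Ac ac bc] Aa by simp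
    have cb: "vnorm c \<le> L * vnorm b" unfolding c_def L_def
      by (rule key_contract[OF H ev assms(1,2) PP n bc]) (use borth in \<open>simp add: S_def\<close>)
    have corth: "\<forall>w\<in>S. c \<bullet>c w = 0"
    proof
      fix w assume w: "w \<in> S"
      have wc: "w \<in> carrier_vec n" and Aw: "A *\<^sub>v w = w" using eig_in[of w n A] w unfolding S_def by auto
      have "c \<bullet>c w = b \<bullet>c (A *\<^sub>v w)" unfolding c_def by (rule herm_ip[OF H bc wc])
      also have "\<dots> = 0" using Aw borth w by simp
      finally show "c \<bullet>c w = 0" .
    qed
    have ab0: "a \<bullet>c b = 0" using cip_cnj[OF bc ac] borth aS by simp
    have ac0: "a \<bullet>c c = 0" using cip_cnj[OF cc ac] corth aS by simp
    have XX: "(vnorm x)\<^sup>2 = (vnorm a)\<^sup>2 + (vnorm b)\<^sup>2" using pythag[OF ac bc ab0] xab by simp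
    have AXX: "(vnorm (A *\<^sub>v x))\<^sup>2 = (vnorm a)\<^sup>2 + (vnorm c)\<^sup>2" using pythag[OF ac cc ac0] Ax by simp
    have UAx: "U *\<^sub>v (A *\<^sub>v x) = mu \<cdot>\<^sub>v x" using x(3) Uc Ac x(1) by (simp add: assoc_mult_mat_vec[of _ n n _ n])
    have Axc: "A *\<^sub>v x \<in> carrier_vec n" using Ac x by simp
    have mX: "cmod mu * vnorm x = vnorm (A *\<^sub>v x)"
      using unitary_norm[OF U Axc] UAx vnorm_smult[of mu x] by simp
    have h1: "(cmod mu)\<^sup>2 * (vnorm x)\<^sup>2 \<le> (vnorm a)\<^sup>2 + L\<^sup>2 * (vnorm b)\<^sup>2"
    proof -
      have "(vnorm c)\<^sup>2 \<le> (L * vnorm b)\<^sup>2" using cb by (intro power_mono) auto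
      thus ?thesis using mX AXX by (simp add: power_mult_distrib[symmetric])
    qed
    have h2: "cmod mu * vnorm a \<le> d * vnorm a + vnorm b"
    proof -
      have Ua: "U *\<^sub>v a \<in> carrier_vec n" and Ucv: "U *\<^sub>v c \<in> carrier_vec n" using Uc ac cc by auto
      have PUa: "P *\<^sub>v (U *\<^sub>v a) \<in> carrier_vec n" and PUc: "P *\<^sub>v (U *\<^sub>v c) \<in> carrier_vec n" using Pc Ua Ucv by auto
      have "mu \<cdot>\<^sub>v a = P *\<^sub>v (mu \<cdot>\<^sub>v x)" unfolding a_def using mult_mat_vec[OF Pc x(1)] by simp
      also have "\<dots> = P *\<^sub>v (U *\<^sub>v a + U *\<^sub>v c)"
        using UAx Ax mult_add_distrib_mat_vec[OF Uc ac cc] by simp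
      also have "\<dots> = P *\<^sub>v (U *\<^sub>v a) + P *\<^sub>v (U *\<^sub>v c)" by (rule mult_add_distrib_mat_vec[OF Pc Ua Ucv])
      finally have eq: "mu \<cdot>\<^sub>v a = P *\<^sub>v (U *\<^sub>v a) + P *\<^sub>v (U *\<^sub>v c)" .
      have "cmod mu * vnorm a = vnorm (mu \<cdot>\<^sub>v a)" by (simp add: vnorm_smult)
      also have "\<dots> \<le> vnorm (P *\<^sub>v (U *\<^sub>v a)) + vnorm (P *\<^sub>v (U *\<^sub>v c))"
        unfolding eq by (rule vnorm_triangle[OF PUa PUc])
      also have "\<dots> \<le> d * vnorm a + vnorm c"
      proof (rule add_mono)
        show "vnorm (P *\<^sub>v (U *\<^sub>v a)) \<le> d * vnorm a" using hd aS unfolding S_def by auto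
        have "vnorm (P *\<^sub>v (U *\<^sub>v c)) \<le> vnorm (U *\<^sub>v c)" by (rule proj_norm[OF PS S Ucv])
        also have "\<dots> = vnorm c" by (rule unitary_norm[OF U cc])
        finally show "vnorm (P *\<^sub>v (U *\<^sub>v c)) \<le> vnorm c" .
      qed
      also have "\<dots> \<le> d * vnorm a + vnorm b"
      proof -
        have "L * vnorm b \<le> 1 * vnorm b" using L by (intro mult_right_mono) auto
        thus ?thesis using cb by simp
      qed
      finally show ?thesis .
    qed
    have X: "0 < vnorm x"
    proof -
      have "vnorm x \<noteq> 0" using vnorm_zero_iff[OF x(1)] x(2) by simp
      thus ?thesis using vnorm_nonneg[of x] by linarith
    qed
    have "cmod mu \<le> f" unfolding f_def
      by (rule real_core[OF X vnorm_nonneg vnorm_nonneg XX norm_ge_zero h1 h2 L assms(3,4)])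
    thus "spectral_radius (U * A) \<le> f" using srmu by simp
  qed
qed

end
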